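(* Let $F$, $H$, $X$, $\Omega$, $Q$ and the sequences generated by the IneIREG method be as described in the context, suppose $H$ is $\mu$-strongly monotone for some $\mu>0$, and suppose $0<\lambda_k<1/L_k$ for all $k\ge0$, where $L_k:=L_F+\eta_kL_H$. Let $\beta_k:=\big(\frac{1}{1-\lambda_k^2L_k^2}+\frac{1}{2\lambda_k\eta_k\mu}\big)^{-1}$. Then for all $x\in X$ and $k\ge0$, $$(1-\beta_k)\|w_k-x\|^2-\|x_{k+1}-x\|^2\ge2\lambda_k\langle F(x),y_k-x\rangle+2\lambda_k\eta_k\langle H(x),y_k-x\rangle.$$
   Context: Work in $\mathbb{R}^n$ with Euclidean inner product $\langle\cdot,\cdot\rangle$ and norm $\|\cdot\|$. The maps $F\colon \mathrm{Dom}\,F\to\mathbb{R}^n$ and $H\colon\mathrm{Dom}\,H\to\mathbb{R}^n$ are monotone and Lipschitz continuous with constants $L_F>0$ and $L_H>0$; $H$ is $\mu$-strongly monotone means $\langle H(x)-H(y),x-y\rangle\ge\mu\|x-y\|^2$ for all $x,y\in\mathrm{Dom}\,H$. $X$ is a nonempty compact convex set and $\Omega$ a nonempty closed convex set with $X\subset\Omega\subset\mathrm{Dom}\,F\cap\mathrm{Dom}\,H$; $P_X,P_\Omega$ denote orthogonal projections. $Q:=\{x\in X:\langle F(x),y-x\rangle\ge0\ \forall y\in X\}$ is assumed nonempty. IneIREG method: start with $x_0=x_{-1}\in X$; for $k=0,1,\dots$, with parameters $\alpha_k\ge0$, $\lambda_k>0$, $\eta_k>0$, set $w_k=x_k+\alpha_k(x_k-x_{k-1})$,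 $w'_k=P_\Omega(w_k)$, $y_k=P_X\big(w_k-\lambda_k(F(w'_k)+\eta_kH(w'_k))\big)$, $x_{k+1}=P_X\big(w_k-\lambda_k(F(y_k)+\eta_kH(y_k))\big)$. *)

theory Defs
  imports "HOL-Analysis.Analysis"
begin

definition monotone_op :: "'a::real_inner set \<Rightarrow> ('a \<Rightarrow> 'a) \<Rightarrow> bool" where
  "monotone_op D T \<longleftrightarrow> (\<forall>x\<in>D. \<forall>y\<in>D. (T x - T y) \<bullet> (x - y) \<ge> 0)"

definition strongly_monotone_op :: "real \<Rightarrow> 'a::real_inner set \<Rightarrow> ('a \<Rightarrow> 'a) \<Rightarrow> bool" where
  "strongly_monotone_op \<mu> D T \<longleftrightarrow> (\<forall>x\<in>D. \<forall>y\<in>D. (T x - T y) \<bullet> (x - y) \<ge> \<mu> * (norm (x - y))\<^sup>2)"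

end

theory Submission
  imports Defs
begin


lemma beta_ineq:
  fixes a b p q r :: real
  assumes a: "a > 0" and b: "b > 0" and p: "p \<ge> 0" and q: "q \<ge> 0" and r: "0 \<le> r" "r \<le> p + q"
  shows "inverse (1/a + 1/b) * r\<^sup>2 \<le> a * p\<^sup>2 + b * q\<^sup>2"
proof -
  have "inverse (1/a + 1/b) = a*b/(a+b)" using a b by (simp add: field_simps)
  moreover have "a*b*(p+q)\<^sup>2 \<le> (a+b)*(a * p\<^sup>2 + b * q\<^sup>2)"
  proof -
    have "(a+b)*(a * p\<^sup>2 + b * q\<^sup>2) - a*b*(p+q)\<^sup>2 = (a*p - b*q)\<^sup>2"
      by (simp add: power2_eq_square algebra_simps)
    thus ?thesis by (metis diff_ge_0_iff_ge zero_le_power2)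
  qed
  moreover have "r\<^sup>2 \<le> (p+q)\<^sup>2" using r by (simp add: power_mono)
  ultimately show ?thesis using a b
    by (simp add: field_simps) (smt (verit) mult_left_mono mult_pos_pos)
qed

theorem corollary4p5:
  fixes F H :: "'a::euclidean_space \<Rightarrow> 'a"
    and DF DH X \<Omega> :: "'a set"
    and LF LH \<mu> :: real
    and \<alpha> lam \<eta> :: "nat \<Rightarrow> real"
    and x w w' y :: "nat \<Rightarrow> 'a"
  assumes F_mono: "monotone_op DF F" and H_mono: "monotone_op DH H"
    and F_lip: "lipschitz_on LF DF F" and H_lip: "lipschitz_on LH DH H"
    and LF_pos: "LF > 0" and LH_pos: "LH > 0"
    and X_ne: "X \<noteq> {}" and X_compact: "compact X" and X_convex: "convex X"
    and \<Omega>_ne: "\<Omega> \<noteq> {}" and \<Omega>_closed: "closed \<Omega>" and \<Omega>_convex: "convex \<Omega>"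
    and X_sub: "X \<subseteq> \<Omega>" and \<Omega>_sub: "\<Omega> \<subseteq> DF \<inter> DH"
    and Q_ne: "{z \<in> X. \<forall>v\<in>X. F z \<bullet> (v - z) \<ge> 0} \<noteq> {}"
    and \<mu>_pos: "\<mu> > 0" and H_strong: "strongly_monotone_op \<mu> DH H"
    and \<alpha>_nonneg: "\<And>k. \<alpha> k \<ge> 0"
    and lam_pos: "\<And>k. lam k > 0"
    and \<eta>_pos: "\<And>k. \<eta> k > 0"
    and lam_bound: "\<And>k. lam k < 1 / (LF + \<eta> k * LH)"
    and x0: "x 0 \<in> X"
    and w_def: "\<And>k. w k = x k + \<alpha> k *\<^sub>R (x k - (if k = 0 then x 0 else x (k - 1)))"
    and w'_def: "\<And>k. w' k = closest_point \<Omega> (w k)"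
    and y_def: "\<And>k. y k = closest_point X (w k - lam k *\<^sub>R (F (w' k) + \<eta> k *\<^sub>R H (w' k)))"
    and x_def: "\<And>k. x (Suc k) = closest_point X (w k - lam k *\<^sub>R (F (y k) + \<eta> k *\<^sub>R H (y k)))"
  shows "\<forall>z\<in>X. \<forall>k.
    (let Lk = LF + \<eta> k * LH;
         \<beta> = inverse (1 / (1 - (lam k)\<^sup>2 * Lk\<^sup>2) + 1 / (2 * lam k * \<eta> k * \<mu>))
     in (1 - \<beta>) * (norm (w k - z))\<^sup>2 - (norm (x (Suc k) - z))\<^sup>2
        \<ge> 2 * lam k * (F z \<bullet> (y k - z)) + 2 * lam k * \<eta> k * (H z \<bullet> (y k - z)))"
proof (intro ballI allI)
  fix z k assume zX: "z \<in> X"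
  define lm where "lm = lam k"
  define e where "e = \<eta> k"
  define L where "L = LF + e * LH"
  define W where "W = w k"
  define Y where "Y = y k"
  define P where "P = x (Suc k)"
  define V where "V = w' k"
  define G where "G = (\<lambda>u. F u + e *\<^sub>R H u)"
  have lm0: "lm > 0" using lam_pos lm_def by auto
  have e0: "e > 0" using \<eta>_pos e_def by auto
  have L0: "L > 0" using LF_pos LH_pos e0 L_def by (simp add: add_pos_pos)
  have lmL: "lm * L < 1" using lam_bound[of k] L0 unfolding lm_def[symmetric] e_def[symmetric] L_def[symmetric]
    by (simp add: field_simps)
  have Xc: "closed X" using X_compact compact_imp_closed by auto
  have YX: "Y \<in> X" unfolding Y_def y_def using closest_point_in_set[OF Xc X_ne] by blast
  have PX: "P \<in> X" unfolding P_def x_def using closest_point_in_set[OF Xc X_ne] by blast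
  have VO: "V \<in> \<Omega>" unfolding V_def w'_def using closest_point_in_set[OF \<Omega>_closed \<Omega>_ne] by blast
  have Ydef: "Y = closest_point X (W - lm *\<^sub>R G V)" unfolding Y_def y_def W_def G_def V_def lm_def e_def ..
  have Pdef: "P = closest_point X (W - lm *\<^sub>R G Y)" unfolding P_def x_def W_def G_def Y_def lm_def e_def ..
  have proj1: "(W - lm *\<^sub>R G Y - P) \<bullet> (z - P) \<le> 0"
    unfolding Pdef by (rule closest_point_dot[OF X_convex Xc zX])
  have proj2: "(W - lm *\<^sub>R G V - Y) \<bullet> (P - Y) \<le> 0"
    unfolding Ydef by (rule closest_point_dot[OF X_convex Xc PX])
  have D: "\<And>u. u \<in> X \<Longrightarrow> u \<in> DF \<and> u \<in> DH" using X_sub \<Omega>_sub by auto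
  have DV: "V \<in> DF" "V \<in> DH" using VO \<Omega>_sub by auto
  have lip: "norm (G V - G Y) \<le> L * norm (V - Y)"
  proof -
    have "norm (F V - F Y) \<le> LF * norm (V - Y)"
      using lipschitz_onD[OF F_lip DV(1)] D[OF YX] by (simp add: dist_norm)
    moreover have "norm (H V - H Y) \<le> LH * norm (V - Y)"
      using lipschitz_onD[OF H_lip DV(2)] D[OF YX] by (simp add: dist_norm)
    moreover have "G V - G Y = (F V - F Y) + e *\<^sub>R (H V - H Y)"
      unfolding G_def by (simp add: algebra_simps)
    ultimately have "norm (G V - G Y) \<le> LF * norm (V - Y) + e * (LH * norm (V - Y))"
      using e0 by (smt (verit) norm_scaleR norm_triangle_ineq abs_of_pos mult_left_mono)
    thus ?thesis unfolding L_def by (simp add: algebra_simps)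
  qed
  have nonexp: "norm (V - Y) \<le> norm (W - Y)"
  proof -
    have "Y = closest_point \<Omega> Y" using YX X_sub closest_point_self by (metis subsetD)
    hence "dist V Y \<le> dist W Y" unfolding V_def w'_def W_def
      using closest_point_lipschitz[OF \<Omega>_convex \<Omega>_closed \<Omega>_ne] by metis
    thus ?thesis by (simp add: dist_norm)
  qed
  have strong: "(G Y - G z) \<bullet> (Y - z) \<ge> e * \<mu> * (norm (Y - z))\<^sup>2"
  proof -
    have "(F Y - F z) \<bullet> (Y - z) \<ge> 0" using F_mono D[OF YX] D[OF zX] unfolding monotone_op_def by blast
    moreover have "(H Y - H z) \<bullet> (Y - z) \<ge> \<mu> * (norm (Y - z))\<^sup>2"
      using H_strong D[OF YX] D[OF zX] unfolding strongly_monotone_op_def by blast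
    moreover have "(G Y - G z) \<bullet> (Y - z) = (F Y - F z) \<bullet> (Y - z) + e * ((H Y - H z) \<bullet> (Y - z))"
      unfolding G_def by (simp add: algebra_simps inner_simps)
    moreover have "e * ((H Y - H z) \<bullet> (Y - z)) \<ge> e * (\<mu> * (norm (Y - z))\<^sup>2)"
      using calculation(2) e0 by (simp add: mult_left_mono)
    ultimately show ?thesis by simp
  qed
  define a where "a = 1 - lm\<^sup>2 * L\<^sup>2"
  define b where "b = 2 * lm * e * \<mu>"
  have a0: "a > 0"
  proof -
    have "(lm * L)\<^sup>2 < 1\<^sup>2"
      by (rule power_strict_mono) (use lmL lm0 L0 in auto)
    thus ?thesis by (simp add: power_mult_distrib a_def)
  qed
  have b0: "b > 0" unfolding b_def using lm0 e0 \<mu>_pos by simp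
  have A: "(norm (P - z))\<^sup>2 \<le> (norm (W - z))\<^sup>2 - (norm (W - P))\<^sup>2 - 2 * lm * (G Y \<bullet> (P - z))"
  proof -
    have eq: "(norm (W - z))\<^sup>2 = (norm (W - P))\<^sup>2 + (norm (P - z))\<^sup>2 + 2 * ((W - P) \<bullet> (P - z))"
      by (simp add: power2_norm_eq_inner inner_simps algebra_simps inner_commute)
    have "(W - lm *\<^sub>R G Y - P) \<bullet> (z - P) = (W - P) \<bullet> (z - P) + lm * (G Y \<bullet> (P - z))"
      by (simp add: inner_simps algebra_simps)
    hence "(W - P) \<bullet> (P - z) \<ge> lm * (G Y \<bullet> (P - z))" using proj1
      by (smt (verit) inner_minus_right minus_diff_eq)
    thus ?thesis using eq by linarith
  qed
  have B: "- (norm (W - P))\<^sup>2 - 2 * lm * (G Y \<bullet> (P - Y)) \<le> - a * (norm (W - Y))\<^sup>2"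
  proof -
    have eq: "(norm (W - P))\<^sup>2 = (norm (W - Y))\<^sup>2 + (norm (Y - P))\<^sup>2 + 2 * ((W - Y) \<bullet> (Y - P))"
      by (simp add: power2_norm_eq_inner inner_simps algebra_simps inner_commute)
    have "(W - lm *\<^sub>R G V - Y) \<bullet> (P - Y) = (W - Y) \<bullet> (P - Y) - lm * (G V \<bullet> (P - Y))"
      by (simp add: inner_simps algebra_simps)
    hence p2: "(W - Y) \<bullet> (P - Y) \<le> lm * (G V \<bullet> (P - Y))" using proj2 by linarith
    have ws: "(W - Y) \<bullet> (Y - P) = - ((W - Y) \<bullet> (P - Y))"
      by (metis inner_minus_right minus_diff_eq)
    have c: "(G V - G Y) \<bullet> (P - Y) \<le> L * norm (V - Y) * norm (P - Y)"
      using norm_cauchy_schwarz[of "G V - G Y" "P - Y"] lip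
      by (smt (verit) mult_right_mono norm_ge_zero)
    have gs: "G V \<bullet> (P - Y) - G Y \<bullet> (P - Y) = (G V - G Y) \<bullet> (P - Y)" by (simp add: inner_simps)
    have lhs: "- (norm (W - P))\<^sup>2 - 2 * lm * (G Y \<bullet> (P - Y)) \<le>
        - (norm (W - Y))\<^sup>2 - (norm (P - Y))\<^sup>2 + 2 * lm * (L * norm (V - Y) * norm (P - Y))"
    proof -
      have "2 * lm * ((G V - G Y) \<bullet> (P - Y)) \<le> 2 * lm * (L * norm (V - Y) * norm (P - Y))"
        using c lm0 by simp
      moreover have "norm (Y - P) = norm (P - Y)" by (simp add: norm_minus_commute)
      moreover have "2 * lm * (G V \<bullet> (P - Y)) - 2 * lm * (G Y \<bullet> (P - Y)) = 2 * lm * ((G V - G Y) \<bullet> (P - Y))"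
        using gs by (simp add: algebra_simps)
      moreover have "2 * ((W - Y) \<bullet> (P - Y)) \<le> 2 * lm * (G V \<bullet> (P - Y))" using p2 by simp
      moreover have "(norm (Y - P))\<^sup>2 = (norm (P - Y))\<^sup>2" by (simp add: norm_minus_commute)
      ultimately show ?thesis using eq ws by linarith
    qed
    have "2 * lm * (L * norm (V - Y) * norm (P - Y)) \<le> (lm * L * norm (V - Y))\<^sup>2 + (norm (P - Y))\<^sup>2"
      using sum_squares_bound[of "lm * L * norm (V - Y)" "norm (P - Y)"] by (simp add: algebra_simps)
    moreover have "(lm * L * norm (V - Y))\<^sup>2 \<le> lm\<^sup>2 * L\<^sup>2 * (norm (W - Y))\<^sup>2"
    proof -
      have "(norm (V - Y))\<^sup>2 \<le> (norm (W - Y))\<^sup>2" using nonexp by (simp add: power_mono)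
      hence "lm\<^sup>2 * L\<^sup>2 * (norm (V - Y))\<^sup>2 \<le> lm\<^sup>2 * L\<^sup>2 * (norm (W - Y))\<^sup>2"
        by (simp add: mult_left_mono)
      thus ?thesis by (simp add: power_mult_distrib)
    qed
    ultimately show ?thesis using lhs unfolding a_def by (simp add: algebra_simps)
  qed
  have C: "- 2 * lm * (G Y \<bullet> (Y - z)) \<le> - b * (norm (Y - z))\<^sup>2 - 2 * lm * (G z \<bullet> (Y - z))"
  proof -
    have "G Y \<bullet> (Y - z) = (G Y - G z) \<bullet> (Y - z) + G z \<bullet> (Y - z)" by (simp add: inner_simps)
    hence "G Y \<bullet> (Y - z) \<ge> e * \<mu> * (norm (Y - z))\<^sup>2 + G z \<bullet> (Y - z)" using strong by linarith
    hence "2 * lm * (G Y \<bullet> (Y - z)) \<ge> 2 * lm * (e * \<mu> * (norm (Y - z))\<^sup>2 + G z \<bullet> (Y - z))"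
      using lm0 by simp
    thus ?thesis unfolding b_def by (simp add: algebra_simps)
  qed
  have split: "G Y \<bullet> (P - z) = G Y \<bullet> (P - Y) + G Y \<bullet> (Y - z)" by (simp add: inner_simps)
  have main: "(norm (P - z))\<^sup>2 \<le> (norm (W - z))\<^sup>2 - (a * (norm (W - Y))\<^sup>2 + b * (norm (Y - z))\<^sup>2)
      - 2 * lm * (G z \<bullet> (Y - z))"
    using A B C split by (simp add: algebra_simps)
  have tri: "norm (W - z) \<le> norm (W - Y) + norm (Y - z)"
    by (metis diff_add_cancel add_diff_eq norm_triangle_ineq diff_diff_eq2)
  have beta: "inverse (1/a + 1/b) * (norm (W - z))\<^sup>2 \<le> a * (norm (W - Y))\<^sup>2 + b * (norm (Y - z))\<^sup>2"
    by (rule beta_ineq[OF a0 b0 norm_ge_zero norm_ge_zero norm_ge_zero tri])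
  have Gz: "G z \<bullet> (Y - z) = F z \<bullet> (Y - z) + e * (H z \<bullet> (Y - z))" unfolding G_def by (simp add: inner_simps algebra_simps)
  have fin: "(1 - inverse (1/a + 1/b)) * (norm (W - z))\<^sup>2 - (norm (P - z))\<^sup>2
      \<ge> 2 * lm * (F z \<bullet> (Y - z)) + 2 * lm * e * (H z \<bullet> (Y - z))"
  proof -
    have q: "\<And>A B. 2*lm*(A + e*B) = 2*lm*A + 2*lm*e*B" by (simp add: algebra_simps)
    have "2 * lm * (G z \<bullet> (Y - z)) = 2 * lm * (F z \<bullet> (Y - z)) + 2 * lm * e * (H z \<bullet> (Y - z))"
      unfolding Gz by (rule q)
    moreover have "(1 - inverse (1/a + 1/b)) * (norm (W - z))\<^sup>2 = (norm (W - z))\<^sup>2 - inverse (1/a + 1/b) * (norm (W - z))\<^sup>2"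
      by (simp add: algebra_simps)
    ultimately show ?thesis using main beta by linarith
  qed
  show "let Lk = LF + \<eta> k * LH;
         \<beta> = inverse (1 / (1 - (lam k)\<^sup>2 * Lk\<^sup>2) + 1 / (2 * lam k * \<eta> k * \<mu>))
     in (1 - \<beta>) * (norm (w k - z))\<^sup>2 - (norm (x (Suc k) - z))\<^sup>2
        \<ge> 2 * lam k * (F z \<bullet> (y k - z)) + 2 * lam k * \<eta> k * (H z \<bullet> (y k - z))"
    using fin unfolding Let_def a_def b_def L_def lm_def e_def W_def P_def Y_def .
qed

end
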